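(* $\displaystyle\min_{\underline y\in\mathcal F}\sum_{j\in\tilde R}c_jy_j\ge\min_{\underline x\in\mathcal F_0}\sum_{j\in\tilde R}c_jx_j$.
   Context: Let $G=(V,E)$ be a finite undirected graph with $V=Q\cup R\cup B$ (pairwise disjoint), where $Q$ is the set of sources, $R$ the set of potential relay locations and $B$ the set of potential sink locations; let $h_{\max}$ be a positive integer and $c_s,c_r\ge0$. Form the augmented graph $\tilde G=(\tilde V,\tilde E)$ with $\tilde V=V\cup\{0\}$, where $0$ is a new vertex (virtual sink), and $\tilde E=E\cup\{\{0,b\}:b\in B\}$. Let $\tilde R=R\cup B$ with node costs $c_j=c_r$ for $j\in R$ and $c_j=c_s$ for $j\in B$. For a source $k\in Q$, a node cut for $k$ is a set $\gamma\subseteq\tilde V\setminus\{k,0\}$ whose deletion disconnects $k$ from $0$ in $\tilde G$; it is minimal if no proper subset is a node cut; $\Gamma^k$ denotes the set of minimal node cuts for $k$. A vector $\underline y=((y_{j,k})_{k\in Q,\,j\in\tilde V\setminus\{k,0\}},(y_j)_{j\in\tilde R})$ belongs to $\mathcal F$ iff: (i) $\sum_{j\in\gamma}y_{j,k}\ge1$ for all $\gamma\in\Gamma^k$, $k\in Q$; (ii) $y_j\ge y_{j,k}$ for all $j\in\tilde R$, $k\in Q$; (iii) $\sum_{j\in\tilde V\setminus\{k,0\}}y_{j,k}\le h_{\max}$ for all $k\in Q$; (iv) all $y_{j,k},y_j\in\{0,1\}$. For $k\in Q$ let $\mathcal P'_k$ be the set of paths in $\tilde G$ from $k$ to $0$ with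 at most $h_{\max}+1$ edges, and let $\mathcal U_0$ be the set of tuples $\underline g=(p_k)_{k\in Q}$ with $p_k\in\mathcal P'_k$. For $\underline g\in\mathcal U_0$ define $\underline x(\underline g)$ by $x_{j,k}=1$ if $j$ is a vertex of $p_k$ and $0$ otherwise ($k\in Q$, $j\in\tilde V\setminus\{k,0\}$), and $x_j=1$ if $x_{j,k}=1$ for some $k\in Q$ and $0$ otherwise ($j\in\tilde R$). Let $\mathcal F_0=\{\underline x(\underline g):\underline g\in\mathcal U_0\}$. A minimum over an empty set is taken to be $+\infty$. *)

theory Defs
  imports "HOL-Library.Extended_Real"
begin

(* Vertices of the augmented graph: None is the virtual sink 0, Some v is v \<in> V. *)

definition aug_V :: "'v set \<Rightarrow> 'v option set" where
  "aug_V V = insert None (Some ` V)"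

definition aug_E :: "'v set set \<Rightarrow> 'v set \<Rightarrow> 'v option set set" where
  "aug_E E B = (image Some) ` E \<union> {{None, Some b} | b. b \<in> B}"

definition aug_R :: "'v set \<Rightarrow> 'v set \<Rightarrow> 'v option set" where
  "aug_R R B = Some ` (R \<union> B)"

definition is_path :: "'a set \<Rightarrow> 'a set set \<Rightarrow> 'a list \<Rightarrow> 'a \<Rightarrow> 'a \<Rightarrow> bool" where
  "is_path VV EE p u w \<longleftrightarrow> p \<noteq> [] \<and> hd p = u \<and> last p = w \<and> distinct p \<and> set p \<subseteq> VV
     \<and> (\<forall>i. Suc i < length p \<longrightarrow> {p ! i, p ! Suc i} \<in> EE)"

definition node_cut :: "'v set \<Rightarrow> 'v set set \<Rightarrow> 'v set \<Rightarrow> 'v \<Rightarrow> 'v option set \<Rightarrow> bool" where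
  "node_cut V E B k \<gamma> \<longleftrightarrow> \<gamma> \<subseteq> aug_V V - {Some k, None} \<and>
     \<not> (\<exists>p. is_path (aug_V V - \<gamma>) (aug_E E B) p (Some k) None)"

definition min_node_cuts :: "'v set \<Rightarrow> 'v set set \<Rightarrow> 'v set \<Rightarrow> 'v \<Rightarrow> 'v option set set" where
  "min_node_cuts V E B k = {\<gamma>. node_cut V E B k \<gamma> \<and> (\<forall>\<gamma>'. \<gamma>' \<subset> \<gamma> \<longrightarrow> \<not> node_cut V E B k \<gamma>')}"

(* A vector y = ((y_{j,k}), (y_j)) is a pair of functions: fst y j k = y_{j,k}, snd y j = y_j.
   Entries outside the index set are fixed to 0 (extensional representation). *)
type_synonym 'v yvec = "('v option \<Rightarrow> 'v \<Rightarrow> real) \<times> ('v option \<Rightarrow> real)"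

definition feasible_F ::
  "'v set \<Rightarrow> 'v set set \<Rightarrow> 'v set \<Rightarrow> 'v set \<Rightarrow> 'v set \<Rightarrow> nat \<Rightarrow> 'v yvec set" where
  "feasible_F V E Q R B hmax = {(yk, yv).
     (\<forall>k j. \<not> (k \<in> Q \<and> j \<in> aug_V V - {Some k, None}) \<longrightarrow> yk j k = 0) \<and>
     (\<forall>j. j \<notin> aug_R R B \<longrightarrow> yv j = 0) \<and>
     (\<forall>k\<in>Q. \<forall>\<gamma>\<in>min_node_cuts V E B k. (\<Sum>j\<in>\<gamma>. yk j k) \<ge> 1) \<and>
     (\<forall>j\<in>aug_R R B. \<forall>k\<in>Q. yv j \<ge> yk j k) \<and>
     (\<forall>k\<in>Q. (\<Sum>j\<in>aug_V V - {Some k, None}. yk j k) \<le> real hmax) \<and>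
     (\<forall>k\<in>Q. \<forall>j\<in>aug_V V - {Some k, None}. yk j k \<in> {0, 1}) \<and>
     (\<forall>j\<in>aug_R R B. yv j \<in> {0, 1})}"

definition paths_P' :: "'v set \<Rightarrow> 'v set set \<Rightarrow> 'v set \<Rightarrow> nat \<Rightarrow> 'v \<Rightarrow> 'v option list set" where
  "paths_P' V E B hmax k = {p. is_path (aug_V V) (aug_E E B) p (Some k) None \<and> length p - 1 \<le> hmax + 1}"

definition x_of :: "'v set \<Rightarrow> 'v set \<Rightarrow> 'v set \<Rightarrow> 'v set \<Rightarrow> ('v \<Rightarrow> 'v option list) \<Rightarrow> 'v yvec" where
  "x_of V Q R B g =
     (let xk = (\<lambda>j k. if k \<in> Q \<and> j \<in> aug_V V - {Some k, None} \<and> j \<in> set (g k) then 1 else 0)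
      in (xk, (\<lambda>j. if j \<in> aug_R R B \<and> (\<exists>k\<in>Q. xk j k = 1) then 1 else 0)))"

definition feasible_F0 ::
  "'v set \<Rightarrow> 'v set set \<Rightarrow> 'v set \<Rightarrow> 'v set \<Rightarrow> 'v set \<Rightarrow> nat \<Rightarrow> 'v yvec set" where
  "feasible_F0 V E Q R B hmax =
     {x_of V Q R B g | g. \<forall>k\<in>Q. g k \<in> paths_P' V E B hmax k}"

definition node_cost :: "'v set \<Rightarrow> real \<Rightarrow> real \<Rightarrow> 'v option \<Rightarrow> real" where
  "node_cost R cs cr j = (if j \<in> Some ` R then cr else cs)"

definition total_cost :: "'v set \<Rightarrow> 'v set \<Rightarrow> real \<Rightarrow> real \<Rightarrow> 'v yvec \<Rightarrow> real" where
  "total_cost R B cs cr y = (\<Sum>j\<in>aug_R R B. node_cost R cs cr j * snd y j)"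

end

theory Submission
  imports Defs
begin

lemma finite_aug_V: "finite V \<Longrightarrow> finite (aug_V V)"
  by (simp add: aug_V_def)

lemma path_exists:
  assumes fin: "finite V" and y: "(yk, yv) \<in> feasible_F V E Q R B hmax" and k: "k \<in> Q"
  shows "\<exists>p. is_path (aug_V V - {j \<in> aug_V V - {Some k, None}. yk j k = 0}) (aug_E E B) p (Some k) None"
proof (rule ccontr)
  define \<gamma> where "\<gamma> = {j \<in> aug_V V - {Some k, None}. yk j k = 0}"
  assume "\<not> ?thesis"
  hence nc: "node_cut V E B k \<gamma>" unfolding node_cut_def \<gamma>_def by auto
  have fg: "finite \<gamma>" unfolding \<gamma>_def using finite_aug_V[OF fin] by auto
  let ?P = "\<lambda>g. g \<subseteq> \<gamma> \<and> node_cut V E B k g"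
  have "\<exists>x. ?P x \<and> (\<forall>z. ?P z \<longrightarrow> card x \<le> card z)"
    using ex_has_least_nat[where P="?P" and k="\<gamma>" and m=card] nc by auto
  then obtain g0 where g0: "?P g0" and minc: "\<forall>z. ?P z \<longrightarrow> card g0 \<le> card z" by blast
  have fg0: "finite g0" using g0 fg finite_subset by blast
  have "g0 \<in> min_node_cuts V E B k"
    unfolding min_node_cuts_def
  proof (intro CollectI conjI allI impI notI)
    show "node_cut V E B k g0" using g0 by simp
  next
    fix g' assume "g' \<subset> g0" "node_cut V E B k g'"
    moreover hence "card g' < card g0" using fg0 psubset_card_mono by blast
    moreover have "g' \<subseteq> \<gamma>" using \<open>g' \<subset> g0\<close> g0 by blast
    ultimately have "card g0 \<le> card g'" "card g' < card g0" using minc[rule_format, of g'] by auto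
    thus False by simp
  qed
  hence "(\<Sum>j\<in>g0. yk j k) \<ge> 1" using y k unfolding feasible_F_def by auto
  moreover have "(\<Sum>j\<in>g0. yk j k) = 0" using g0 unfolding \<gamma>_def by (intro sum.neutral) auto
  ultimately show False by simp
qed

lemma is_path_mono: "is_path A EE p u w \<Longrightarrow> A \<subseteq> A' \<Longrightarrow> is_path A' EE p u w"
  unfolding is_path_def by auto

theorem corollary3:
  fixes V :: "'v set" and E :: "'v set set" and Q R B :: "'v set"
    and hmax :: nat and cs cr :: real
  assumes "finite V"
    and "\<forall>e\<in>E. e \<subseteq> V \<and> card e = 2"
    and "V = Q \<union> R \<union> B"
    and "Q \<inter> R = {}" and "Q \<inter> B = {}" and "R \<inter> B = {}"
    and "hmax > 0"
    and "cs \<ge> 0" and "cr \<ge> 0"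
  shows "(INF y\<in>feasible_F V E Q R B hmax. ereal (total_cost R B cs cr y))
           \<ge> (INF x\<in>feasible_F0 V E Q R B hmax. ereal (total_cost R B cs cr x))"
proof (rule INF_mono)
  fix y assume yF: "y \<in> feasible_F V E Q R B hmax"
  obtain yk yv where yeq: "y = (yk, yv)" by (cases y)
  have yF': "(yk, yv) \<in> feasible_F V E Q R B hmax" using yF yeq by simp
  define S where "S k = {j \<in> aug_V V - {Some k, None}. yk j k = 0}" for k
  define g where "g k = (SOME p. is_path (aug_V V - S k) (aug_E E B) p (Some k) None)" for k
  have gp: "is_path (aug_V V - S k) (aug_E E B) (g k) (Some k) None" if "k \<in> Q" for k
    unfolding g_def S_def using someI_ex[OF path_exists[OF assms(1) yF' that]] by blast
  have ykv: "yk j k \<in> {0,1}" if "k \<in> Q" "j \<in> aug_V V - {Some k, None}" for j k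
    using yF' that unfolding feasible_F_def by auto
  have gP: "g k \<in> paths_P' V E B hmax k" if k: "k \<in> Q" for k
  proof -
    let ?T = "{j \<in> aug_V V - {Some k, None}. yk j k = 1}"
    have fT: "finite ?T" using finite_aug_V[OF assms(1)] by auto
    have sub: "set (g k) \<subseteq> insert (Some k) (insert None ?T)"
      using gp[OF k] ykv[OF k] unfolding is_path_def S_def by auto
    have "length (g k) = card (set (g k))" using gp[OF k] unfolding is_path_def
      by (simp add: distinct_card)
    also have "\<dots> \<le> card (insert (Some k) (insert None ?T))"
      using sub fT by (intro card_mono) auto
    also have "\<dots> \<le> card ?T + 2" using fT
      by (simp add: card_insert_if)
    finally have L: "length (g k) \<le> card ?T + 2" .
    have "real (card ?T) = (\<Sum>j\<in>?T. yk j k)" by simp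
    also have "\<dots> = (\<Sum>j\<in>aug_V V - {Some k, None}. yk j k)"
      using finite_aug_V[OF assms(1)] ykv[OF k]
      by (intro sum.mono_neutral_left) auto
    also have "\<dots> \<le> real hmax" using yF' k unfolding feasible_F_def by auto
    finally have "card ?T \<le> hmax" by simp
    with L show ?thesis unfolding paths_P'_def using gp[OF k] is_path_mono[of _ _ "g k"] by auto
  qed
  define x where "x = x_of V Q R B g"
  have xF0: "x \<in> feasible_F0 V E Q R B hmax" unfolding x_def feasible_F0_def using gP by blast
  have "total_cost R B cs cr x \<le> total_cost R B cs cr y"
    unfolding total_cost_def
  proof (rule sum_mono)
    fix j assume j: "j \<in> aug_R R B"
    have c: "node_cost R cs cr j \<ge> 0" using assms unfolding node_cost_def by auto
    have yv01: "yv j \<in> {0,1}" using yF' j unfolding feasible_F_def by auto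
    have "snd x j \<le> snd y j"
    proof (cases "snd x j = 0")
      case True thus ?thesis using yv01 yeq by auto
    next
      case False
      then obtain k where k: "k \<in> Q" "j \<in> aug_V V - {Some k, None}" "j \<in> set (g k)"
        unfolding x_def x_of_def Let_def by (auto split: if_splits)
      have "j \<notin> S k" using gp[OF k(1)] k(3) unfolding is_path_def by auto
      hence "yk j k = 1" using ykv[OF k(1,2)] k(2) unfolding S_def by auto
      moreover have "yv j \<ge> yk j k" using yF' j k(1) unfolding feasible_F_def by auto
      moreover have "snd x j \<le> 1" unfolding x_def x_of_def Let_def by auto
      ultimately show ?thesis using yeq by auto
    qed
    thus "node_cost R cs cr j * snd x j \<le> node_cost R cs cr j * snd y j"
      using c by (simp add: mult_left_mono)
  qed
  thus "\<exists>x\<in>feasible_F0 V E Q R B hmax. ereal (total_cost R B cs cr x) \<le> ereal (total_cost R B cs cr y)"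
    using xF0 by auto
qed

end
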